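(* Let $T$ be a triangle with no right angle. Then the complete 3-graph $K_4^3$ on four vertices (edges $123,124,134,234$) is forbidden for $T$.
   Context: A 3-graph is a 3-uniform hypergraph; $G$ is $F$-free if it has no (not necessarily induced) subhypergraph isomorphic to $F$. For a triangle $T$ with side lengths $a,b,c$ and $\varepsilon>0$, with $\varepsilon'=\varepsilon\min\{a,b,c\}$, a triangle $A'B'C'$ is $\varepsilon$-congruent to $T$ if there are $A,B,C\in\mathbb{R}^2$ with $ABC$ congruent to $T$ and $A',B',C'$ within distance $\varepsilon'$ of $A,B,C$ respectively. For finite $P\subseteq\mathbb{R}^2$, $\mathcal{H}(T,P,\varepsilon)$ is the 3-graph on $P$ whose edges are triples forming triangles $\varepsilon$-congruent to $T$. A 3-graph $H$ is forbidden for $T$ if there exists $\varepsilon>0$ such that for every $P\subseteq\mathbb{R}^2$ with $|P|=|V(H)|$, $\mathcal{H}(T,P,\varepsilon)$ is $H$-free. *)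

theory Defs
  imports "HOL-Analysis.Analysis"
begin

text \<open>A triangle T is given by its side lengths (a,b,c); we use the convention
  that a triangle ABC is congruent to T iff dist B C = a, dist C A = b, dist A B = c.\<close>

type_synonym tri = "real \<times> real \<times> real"

definition is_triangle :: "tri \<Rightarrow> bool" where
  "is_triangle T = (case T of (a, b, c) \<Rightarrow>
      0 < a \<and> 0 < b \<and> 0 < c \<and> a < b + c \<and> b < a + c \<and> c < a + b)"

definition no_right_angle :: "tri \<Rightarrow> bool" where
  "no_right_angle T = (case T of (a, b, c) \<Rightarrow>
      a\<^sup>2 + b\<^sup>2 \<noteq> c\<^sup>2 \<and> a\<^sup>2 + c\<^sup>2 \<noteq> b\<^sup>2 \<and> b\<^sup>2 + c\<^sup>2 \<noteq> a\<^sup>2)"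

definition congruent_to :: "tri \<Rightarrow> real^2 \<Rightarrow> real^2 \<Rightarrow> real^2 \<Rightarrow> bool" where
  "congruent_to T A B C = (case T of (a, b, c) \<Rightarrow>
      dist B C = a \<and> dist C A = b \<and> dist A B = c)"

definition eps_congruent :: "tri \<Rightarrow> real \<Rightarrow> real^2 \<Rightarrow> real^2 \<Rightarrow> real^2 \<Rightarrow> bool" where
  "eps_congruent T \<epsilon> A' B' C' = (case T of (a, b, c) \<Rightarrow>
      (\<exists>A B C. congruent_to T A B C \<and>
         dist A' A \<le> \<epsilon> * min a (min b c) \<and>
         dist B' B \<le> \<epsilon> * min a (min b c) \<and>
         dist C' C \<le> \<epsilon> * min a (min b c)))"

type_synonym 'v hgraph3 = "'v set \<times> 'v set set"

definition is_3graph :: "'v hgraph3 \<Rightarrow> bool" where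
  "is_3graph H = (\<forall>e\<in>snd H. e \<subseteq> fst H \<and> card e = 3)"

definition congr_hgraph :: "tri \<Rightarrow> (real^2) set \<Rightarrow> real \<Rightarrow> (real^2) hgraph3" where
  "congr_hgraph T P \<epsilon> = (P, {e. e \<subseteq> P \<and> card e = 3 \<and>
      (\<exists>x y z. e = {x, y, z} \<and> eps_congruent T \<epsilon> x y z)})"

definition contains_copy :: "'v hgraph3 \<Rightarrow> 'w hgraph3 \<Rightarrow> bool" where
  "contains_copy G F = (\<exists>f. inj_on f (fst F) \<and> f ` fst F \<subseteq> fst G \<and>
      (\<forall>e\<in>snd F. f ` e \<in> snd G))"

definition hfree :: "'v hgraph3 \<Rightarrow> 'w hgraph3 \<Rightarrow> bool" where
  "hfree G F = (\<not> contains_copy G F)"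

definition forbidden_for :: "'w hgraph3 \<Rightarrow> tri \<Rightarrow> bool" where
  "forbidden_for H T = (\<exists>\<epsilon>>0. \<forall>P :: (real^2) set.
      finite P \<and> card P = card (fst H) \<longrightarrow> hfree (congr_hgraph T P \<epsilon>) H)"

definition K43 :: "nat hgraph3" where
  "K43 = ({1, 2, 3, 4}, {{1, 2, 3}, {1, 2, 4}, {1, 3, 4}, {2, 3, 4}})"

end

theory Submission
  imports Defs
begin

lemma d2: fixes x y :: "real^2" shows "(dist x y)^2 = (x$1-y$1)^2 + (x$2-y$2)^2"
proof -
  have "(dist x y)^2 = (x-y)\<bullet>(x-y)" by (simp add: dist_norm dot_square_norm)
  also have "\<dots> = (x$1-y$1)^2 + (x$2-y$2)^2" by (simp add: inner_vec_def sum_2 power2_eq_square)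
  finally show ?thesis .
qed

definition Hf :: "real \<Rightarrow> real \<Rightarrow> real \<Rightarrow> real" where
  "Hf X Y Z = 2*(X*Y+Y*Z+Z*X) - X^2 - Y^2 - Z^2"
definition Qf :: "real \<Rightarrow> real \<Rightarrow> real \<Rightarrow> real" where
  "Qf X Y Z = X+Y+Z"
definition Rf :: "real \<Rightarrow> real \<Rightarrow> real \<Rightarrow> real" where
  "Rf X Y Z = (X+Y-Z)*(X-Y+Z)*(Y+Z-X)"

lemma exact_real:
  fixes u1 u2 v1 v2 w1 w2 H0 Q0 R0 :: real
  defines "nu \<equiv> u1^2+u2^2" and "nv \<equiv> v1^2+v2^2" and "nw \<equiv> w1^2+w2^2"
    and "nuv \<equiv> (u1-v1)^2+(u2-v2)^2" and "nuw \<equiv> (u1-w1)^2+(u2-w2)^2"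
    and "nvw \<equiv> (v1-w1)^2+(v2-w2)^2"
  assumes H0: "H0 > 0" and R0: "R0 \<noteq> 0"
    and H1: "Hf nuv nv nu = H0" and H2: "Hf nuw nw nu = H0"
    and H3: "Hf nvw nw nv = H0" and H4: "Hf nvw nuw nuv = H0"
    and Q1: "Qf nuv nv nu = Q0" and Q2: "Qf nuw nw nu = Q0"
    and Q3: "Qf nvw nw nv = Q0" and Q4: "Qf nvw nuw nuv = Q0"
    and R1: "Rf nuv nv nu = R0"
  shows False
proof -
  define \<alpha> where "\<alpha> = u1 * v2-u2 * v1"
  define \<beta> where "\<beta> = u1 * w2-u2 * w1"
  define \<gamma> where "\<gamma> = v1 * w2-v2 * w1"
  have h1: "Hf nuv nv nu = 4*\<alpha>^2" unfolding Hf_def nu_def nv_def nuv_def \<alpha>_def by algebra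
  have h2: "Hf nuw nw nu = 4*\<beta>^2" unfolding Hf_def nu_def nw_def nuw_def \<beta>_def by algebra
  have h3: "Hf nvw nw nv = 4*\<gamma>^2" unfolding Hf_def nv_def nw_def nvw_def \<gamma>_def by algebra
  have h4: "Hf nvw nuw nuv = 4*(\<alpha>-\<beta>+\<gamma>)^2"
    unfolding Hf_def nuv_def nuw_def nvw_def \<alpha>_def \<beta>_def \<gamma>_def by algebra
  have a0: "\<alpha> \<noteq> 0" using h1 H1 H0 by auto
  have ab: "\<beta>^2 = \<alpha>^2" and ag: "\<gamma>^2 = \<alpha>^2" and ad: "(\<alpha>-\<beta>+\<gamma>)^2 = \<alpha>^2"
    using h1 h2 h3 h4 H1 H2 H3 H4 by auto
  have k1: "\<alpha> * w1 = \<beta> * v1 - \<gamma> * u1" unfolding \<alpha>_def \<beta>_def \<gamma>_def by algebra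
  have k2: "\<alpha> * w2 = \<beta> * v2 - \<gamma> * u2" unfolding \<alpha>_def \<beta>_def \<gamma>_def by algebra
  have r0: "Rf nuv nv nu \<noteq> 0" using R1 R0 by simp
  from ab have "\<beta> = \<alpha> \<or> \<beta> = -\<alpha>" by (metis power2_eq_iff)
  moreover from ag have "\<gamma> = \<alpha> \<or> \<gamma> = -\<alpha>" by (metis power2_eq_iff)
  ultimately consider "\<beta> = \<alpha>" "\<gamma> = \<alpha>" | "\<beta> = \<alpha>" "\<gamma> = -\<alpha>" | "\<beta> = -\<alpha>" "\<gamma> = -\<alpha>"
    | "\<beta> = -\<alpha>" "\<gamma> = \<alpha>" by blast
  then show False
  proof cases
    case 1
    have "\<alpha> * w1 = \<alpha>*(v1-u1)" "\<alpha> * w2 = \<alpha>*(v2-u2)" using k1 k2 1 by (auto simp: algebra_simps)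
    hence w: "w1 = v1-u1" "w2 = v2-u2" using a0 by auto
    have "Qf nuv nv nu - Qf nuw nw nu = -2 * (nu - nv + nuv)"
      unfolding Qf_def nuv_def nv_def nu_def nuw_def nw_def w by algebra
    hence "nu - nv + nuv = 0" using Q1 Q2 by simp
    hence "Rf nuv nv nu = 0" unfolding Rf_def by (simp add: algebra_simps)
    with r0 show False by simp
  next
    case 2
    have "\<alpha> * w1 = \<alpha>*(v1+u1)" "\<alpha> * w2 = \<alpha>*(v2+u2)" using k1 k2 2 by (auto simp: algebra_simps)
    hence w: "w1 = v1+u1" "w2 = v2+u2" using a0 by auto
    have "Qf nuv nv nu - Qf nuw nw nu = -2 * (nv + nu - nuv)"
      unfolding Qf_def nuv_def nv_def nu_def nuw_def nw_def w by algebra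
    hence "nv + nu - nuv = 0" using Q1 Q2 by simp
    hence "Rf nuv nv nu = 0" unfolding Rf_def by (simp add: algebra_simps)
    with r0 show False by simp
  next
    case 3
    have "\<alpha> * w1 = \<alpha>*(u1-v1)" "\<alpha> * w2 = \<alpha>*(u2-v2)" using k1 k2 3 by (auto simp: algebra_simps)
    hence w: "w1 = u1-v1" "w2 = u2-v2" using a0 by auto
    have "Qf nuv nv nu - Qf nvw nw nv = -2 * (nuv + nv - nu)"
      unfolding Qf_def nuv_def nv_def nu_def nvw_def nw_def w by algebra
    hence "nuv + nv - nu = 0" using Q1 Q3 by simp
    hence "Rf nuv nv nu = 0" unfolding Rf_def by (simp add: algebra_simps)
    with r0 show False by simp
  next
    case 4
    hence "(3*\<alpha>)^2 = \<alpha>^2" using ad by simp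
    hence "\<alpha> = 0" by (simp add: power_mult_distrib)
    with a0 show False by simp
  qed
qed
lemma exact_pts:
  fixes p1 p2 p3 p4 :: "real^2" and H0 Q0 R0 :: real
  assumes H0: "H0 > 0" and R0: "R0 \<noteq> 0"
    and H1: "Hf ((dist p2 p3)^2) ((dist p3 p1)^2) ((dist p1 p2)^2) = H0"
    and H2: "Hf ((dist p2 p4)^2) ((dist p4 p1)^2) ((dist p1 p2)^2) = H0"
    and H3: "Hf ((dist p3 p4)^2) ((dist p4 p1)^2) ((dist p1 p3)^2) = H0"
    and H4: "Hf ((dist p3 p4)^2) ((dist p4 p2)^2) ((dist p2 p3)^2) = H0"
    and Q1: "Qf ((dist p2 p3)^2) ((dist p3 p1)^2) ((dist p1 p2)^2) = Q0"
    and Q2: "Qf ((dist p2 p4)^2) ((dist p4 p1)^2) ((dist p1 p2)^2) = Q0"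
    and Q3: "Qf ((dist p3 p4)^2) ((dist p4 p1)^2) ((dist p1 p3)^2) = Q0"
    and Q4: "Qf ((dist p3 p4)^2) ((dist p4 p2)^2) ((dist p2 p3)^2) = Q0"
    and R1: "Rf ((dist p2 p3)^2) ((dist p3 p1)^2) ((dist p1 p2)^2) = R0"
  shows False
proof -
  define u1 where "u1 = p2$1 - p1$1"
  define u2 where "u2 = p2$2 - p1$2"
  define v1 where "v1 = p3$1 - p1$1"
  define v2 where "v2 = p3$2 - p1$2"
  define w1 where "w1 = p4$1 - p1$1"
  define w2 where "w2 = p4$2 - p1$2"
  have e1: "(dist p1 p2)^2 = u1^2+u2^2" unfolding d2 u1_def u2_def by (simp add: power2_eq_square algebra_simps)
  have e2: "(dist p3 p1)^2 = v1^2+v2^2" unfolding d2 v1_def v2_def by (simp add: power2_eq_square algebra_simps)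
  have e2': "(dist p1 p3)^2 = v1^2+v2^2" unfolding d2 v1_def v2_def by (simp add: power2_eq_square algebra_simps)
  have e3: "(dist p4 p1)^2 = w1^2+w2^2" unfolding d2 w1_def w2_def by (simp add: power2_eq_square algebra_simps)
  have e4: "(dist p2 p3)^2 = (u1-v1)^2+(u2-v2)^2" unfolding d2 u1_def u2_def v1_def v2_def by (simp add: power2_eq_square algebra_simps)
  have e5: "(dist p2 p4)^2 = (u1-w1)^2+(u2-w2)^2" unfolding d2 u1_def u2_def w1_def w2_def by (simp add: power2_eq_square algebra_simps)
  have e5': "(dist p4 p2)^2 = (u1-w1)^2+(u2-w2)^2" unfolding d2 u1_def u2_def w1_def w2_def by (simp add: power2_eq_square algebra_simps)
  have e6: "(dist p3 p4)^2 = (v1-w1)^2+(v2-w2)^2" unfolding d2 v1_def v2_def w1_def w2_def by (simp add: power2_eq_square algebra_simps)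
  show False
    using exact_real[where ?u1.0=u1 and ?u2.0=u2 and ?v1.0=v1 and ?v2.0=v2 and ?w1.0=w1 and ?w2.0=w2 and ?H0.0=H0 and ?R0.0=R0 and ?Q0.0=Q0] H0 R0 H1 H2 H3 H4 Q1 Q2 Q3 Q4 R1
    unfolding e1 e2 e2' e3 e4 e5 e5' e6 by blast
qed

lemma Hf_sym: "Hf X Y Z = Hf Y X Z" "Hf X Y Z = Hf X Z Y" unfolding Hf_def by algebra+
lemma Qf_sym: "Qf X Y Z = Qf Y X Z" "Qf X Y Z = Qf X Z Y" unfolding Qf_def by algebra+
lemma Rf_sym: "Rf X Y Z = Rf Y X Z" "Rf X Y Z = Rf X Z Y" unfolding Rf_def by algebra+

definition faceD :: "real \<Rightarrow> real \<Rightarrow> real \<Rightarrow> real^2 \<Rightarrow> real^2 \<Rightarrow> real^2 \<Rightarrow> real" where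
  "faceD a b c x y z =
    \<bar>Hf ((dist y z)^2) ((dist z x)^2) ((dist x y)^2) - Hf (a^2) (b^2) (c^2)\<bar>
  + \<bar>Qf ((dist y z)^2) ((dist z x)^2) ((dist x y)^2) - Qf (a^2) (b^2) (c^2)\<bar>
  + \<bar>Rf ((dist y z)^2) ((dist z x)^2) ((dist x y)^2) - Rf (a^2) (b^2) (c^2)\<bar>"

lemma faceD_swap1: "faceD a b c x y z = faceD a b c y x z"
  unfolding faceD_def by (metis Hf_sym Qf_sym Rf_sym dist_commute)
lemma faceD_swap2: "faceD a b c x y z = faceD a b c x z y"
  unfolding faceD_def by (metis Hf_sym Qf_sym Rf_sym dist_commute)

lemma faceD_perm:
  assumes "{p,q,r} = {x,y,z}" "p \<noteq> q" "q \<noteq> r" "p \<noteq> r"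
  shows "faceD a b c x y z = faceD a b c p q r"
proof -
  have "x \<in> {p,q,r}" "y \<in> {p,q,r}" "z \<in> {p,q,r}" using assms(1) by auto
  moreover have "x \<noteq> y" "y \<noteq> z" "x \<noteq> z"
  proof -
    have c: "card {p,q,r} = 3" using assms(2-4) by simp
    have "card {x,y,z} = 3" using c assms(1) by simp
    then show "x \<noteq> y" "y \<noteq> z" "x \<noteq> z" by (auto simp: card_insert_if split: if_splits)
  qed
  ultimately show ?thesis using faceD_swap1 faceD_swap2 by auto
qed

lemma faceD_nonneg: "faceD a b c x y z \<ge> 0" unfolding faceD_def by simp

lemma faceD_transl: "faceD a b c (x - t) (y - t) (z - t) = faceD a b c x y z"
  unfolding faceD_def by (simp add: dist_norm algebra_simps)

lemma approx:
  fixes a b c \<eta> :: real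
  assumes "\<eta> > 0"
  shows "\<exists>\<delta>>0. \<forall>x y z. \<bar>dist y z - a\<bar> < \<delta> \<and> \<bar>dist z x - b\<bar> < \<delta> \<and> \<bar>dist x y - c\<bar> < \<delta>
           \<longrightarrow> faceD a b c x y z < \<eta>"
proof -
  define \<phi> :: "real \<times> real \<times> real \<Rightarrow> real" where "\<phi> p =
    \<bar>Hf ((fst p)^2) ((fst (snd p))^2) ((snd (snd p))^2) - Hf (a^2) (b^2) (c^2)\<bar>
  + \<bar>Qf ((fst p)^2) ((fst (snd p))^2) ((snd (snd p))^2) - Qf (a^2) (b^2) (c^2)\<bar>
  + \<bar>Rf ((fst p)^2) ((fst (snd p))^2) ((snd (snd p))^2) - Rf (a^2) (b^2) (c^2)\<bar>" for p
  have "isCont \<phi> (a,b,c)" unfolding \<phi>_def Hf_def Qf_def Rf_def by (intro continuous_intros)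
  then obtain \<delta> where d: "\<delta> > 0" "\<And>p. dist p (a,b,c) < \<delta> \<Longrightarrow> dist (\<phi> p) (\<phi> (a,b,c)) < \<eta>"
    using assms unfolding continuous_at_eps_delta by blast
  have phi0: "\<phi> (a,b,c) = 0" unfolding \<phi>_def by simp
  show ?thesis
  proof (intro exI[of _ "\<delta>/3"] conjI allI impI)
    show "\<delta>/3 > 0" using d by simp
    fix x y z :: "real^2"
    assume h: "\<bar>dist y z - a\<bar> < \<delta>/3 \<and> \<bar>dist z x - b\<bar> < \<delta>/3 \<and> \<bar>dist x y - c\<bar> < \<delta>/3"
    let ?p = "(dist y z, dist z x, dist x y)"
    have "dist ?p (a,b,c) \<le> \<bar>dist y z - a\<bar> + (\<bar>dist z x - b\<bar> + \<bar>dist x y - c\<bar>)"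
    proof -
      have "dist ?p (a,b,c) = sqrt ((dist (dist y z) a)^2 + (dist (dist z x, dist x y) (b,c))^2)"
        by (simp add: dist_Pair_Pair)
      also have "\<dots> \<le> \<bar>dist (dist y z) a\<bar> + \<bar>dist (dist z x, dist x y) (b,c)\<bar>"
        by (rule sqrt_sum_squares_le_sum_abs)
      also have "dist (dist z x, dist x y) (b,c) \<le> \<bar>dist z x - b\<bar> + \<bar>dist x y - c\<bar>"
        unfolding dist_Pair_Pair using sqrt_sum_squares_le_sum_abs by (simp add: dist_real_def)
      ultimately show ?thesis by (simp add: dist_real_def)
    qed
    also have "\<dots> < \<delta>" using h by linarith
    finally have "dist (\<phi> ?p) 0 < \<eta>" using d(2) phi0 by metis
    then show "faceD a b c x y z < \<eta>" unfolding faceD_def \<phi>_def by (simp add: dist_real_def)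
  qed
qed

lemma dist_approx:
  fixes x y A B :: "real^2"
  assumes "dist x A \<le> e" "dist y B \<le> e"
  shows "\<bar>dist x y - dist A B\<bar> \<le> 2*e"
proof -
  have t1: "dist x y \<le> dist x A + dist A y" by (rule dist_triangle)
  have t2: "dist A y \<le> dist A B + dist B y" by (rule dist_triangle)
  have t3: "dist A B \<le> dist A x + dist x B" by (rule dist_triangle)
  have t4: "dist x B \<le> dist x y + dist y B" by (rule dist_triangle)
  have "dist A x = dist x A" "dist B y = dist y B" by (simp_all add: dist_commute)
  then show ?thesis using t1 t2 t3 t4 assms by linarith
qed

theorem lemma2p8:
  fixes T :: tri
  assumes "is_triangle T" and "no_right_angle T"
  shows "forbidden_for K43 T"
proof -
  obtain a b c where T: "T = (a,b,c)" by (cases T) auto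
  from assms have tri: "0<a" "0<b" "0<c" "a<b+c" "b<a+c" "c<a+b"
    and nr: "a^2+b^2 \<noteq> c^2" "a^2+c^2 \<noteq> b^2" "b^2+c^2 \<noteq> a^2"
    unfolding T is_triangle_def no_right_angle_def by auto
  define m where "m = min a (min b c)"
  have m: "m > 0" using tri by (simp add: m_def)
  define h0 where "h0 = Hf (a^2) (b^2) (c^2)"
  define q0 where "q0 = Qf (a^2) (b^2) (c^2)"
  define r0 where "r0 = Rf (a^2) (b^2) (c^2)"
  have "h0 = (a+b+c)*(b+c-a)*(a+c-b)*(a+b-c)" unfolding h0_def Hf_def by algebra
  moreover have "(a+b+c)*(b+c-a)*(a+c-b)*(a+b-c) > 0" using tri by (simp add: mult_pos_pos)
  ultimately have h0: "h0 > 0" by simp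
  have nz: "a^2+b^2-c^2 \<noteq> 0" "a^2-b^2+c^2 \<noteq> 0" "b^2+c^2-a^2 \<noteq> 0" using nr by auto
  have r0: "r0 \<noteq> 0" unfolding r0_def Rf_def using nz by simp
  have q0: "q0 \<ge> 0" unfolding q0_def Qf_def by simp
  define FF where "FF p1 p2 p3 p4 = faceD a b c p1 p2 p3 + faceD a b c p1 p2 p4
     + faceD a b c p1 p3 p4 + faceD a b c p2 p3 p4" for p1 p2 p3 p4
  have FFpos: "FF p1 p2 p3 p4 > 0" for p1 p2 p3 p4
  proof (rule ccontr)
    assume "\<not> FF p1 p2 p3 p4 > 0"
    then have z: "faceD a b c p1 p2 p3 = 0" "faceD a b c p1 p2 p4 = 0"
      "faceD a b c p1 p3 p4 = 0" "faceD a b c p2 p3 p4 = 0"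
      using faceD_nonneg[of a b c] unfolding FF_def
      by (smt (verit, best))+
    then show False
      using exact_pts[of h0 r0 p2 p3 p1 p4 q0] h0 r0
      unfolding faceD_def h0_def q0_def r0_def
      by (smt (verit, best) abs_not_less_zero abs_ge_zero)
  qed
  define M where "M = sqrt (q0 + 1)"
  have M0: "M \<ge> 0" using q0 by (simp add: M_def)
  define K where "K = cball (0::real^2) M \<times> cball (0::real^2) M \<times> cball (0::real^2) M"
  define G where "G x = FF 0 (fst x) (fst (snd x)) (snd (snd x))" for x :: "(real^2) \<times> (real^2) \<times> (real^2)"
  have cK: "compact K" by (simp add: K_def compact_Times)
  have nK: "K \<noteq> {}" using M0 by (auto simp: K_def)
  have "continuous_on K G" unfolding G_def FF_def faceD_def Hf_def Qf_def Rf_def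
    by (intro continuous_intros)
  then obtain x0 where x0: "x0 \<in> K" "\<forall>y\<in>K. G x0 \<le> G y"
    using continuous_attains_inf[OF cK nK] by blast
  define \<mu> where "\<mu> = G x0"
  have \<mu>: "\<mu> > 0" unfolding \<mu>_def G_def using FFpos by simp
  define \<eta> where "\<eta> = min 1 (\<mu>/4)"
  have \<eta>: "\<eta> > 0" "\<eta> \<le> 1" "4*\<eta> \<le> \<mu>" using \<mu> by (auto simp: \<eta>_def)
  obtain \<delta> where \<delta>: "\<delta> > 0" "\<And>x y z. \<bar>dist y z - a\<bar> < \<delta> \<and> \<bar>dist z x - b\<bar> < \<delta> \<and> \<bar>dist x y - c\<bar> < \<delta>
           \<Longrightarrow> faceD a b c x y z < \<eta>"
    using approx[OF \<eta>(1), of a b c] by blast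
  define \<epsilon> where "\<epsilon> = \<delta> / (4*m)"
  have \<epsilon>: "\<epsilon> > 0" using \<delta> m by (simp add: \<epsilon>_def)
  have em: "2*(\<epsilon>*m) < \<delta>" using \<delta> m by (simp add: \<epsilon>_def)
  show ?thesis unfolding forbidden_for_def
  proof (intro exI[of _ \<epsilon>] conjI allI impI)
    show "\<epsilon> > 0" by (rule \<epsilon>)
    fix P :: "(real^2) set"
    assume "finite P \<and> card P = card (fst K43)"
    show "hfree (congr_hgraph T P \<epsilon>) K43"
      unfolding hfree_def contains_copy_def
    proof
      assume "\<exists>f. inj_on f (fst K43) \<and> f ` fst K43 \<subseteq> fst (congr_hgraph T P \<epsilon>) \<and>
         (\<forall>e\<in>snd K43. f ` e \<in> snd (congr_hgraph T P \<epsilon>))"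
      then obtain f :: "nat \<Rightarrow> real^2" where inj: "inj_on f {1,2,3,4}"
        and edges: "\<forall>e\<in>snd K43. f ` e \<in> snd (congr_hgraph T P \<epsilon>)"
        by (auto simp: K43_def)
      have face: "faceD a b c (f i) (f j) (f k) < \<eta>"
        if e: "{i,j,k} \<in> snd K43" and ijk: "i \<in> {1,2,3,4}" "j \<in> {1,2,3,4}" "k \<in> {1,2,3,4}"
          "i \<noteq> j" "j \<noteq> k" "i \<noteq> k" for i j k
      proof -
        have "f`{i,j,k} \<in> snd (congr_hgraph T P \<epsilon>)" using edges e by blast
        then obtain x y z where xyz: "{f i, f j, f k} = {x,y,z}" "eps_congruent T \<epsilon> x y z"
          unfolding congr_hgraph_def by auto
        from xyz(2) obtain A B C where ABC: "dist B C = a" "dist C A = b" "dist A B = c"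
          "dist x A \<le> \<epsilon>*m" "dist y B \<le> \<epsilon>*m" "dist z C \<le> \<epsilon>*m"
          unfolding eps_congruent_def congruent_to_def T m_def by auto
        have "\<bar>dist y z - a\<bar> < \<delta>" using dist_approx[OF ABC(5) ABC(6)] ABC(1) em by linarith
        moreover have "\<bar>dist z x - b\<bar> < \<delta>" using dist_approx[OF ABC(6) ABC(4)] ABC(2) em by linarith
        moreover have "\<bar>dist x y - c\<bar> < \<delta>" using dist_approx[OF ABC(4) ABC(5)] ABC(3) em by linarith
        ultimately have "faceD a b c x y z < \<eta>" using \<delta>(2) by blast
        moreover have "f i \<noteq> f j" "f j \<noteq> f k" "f i \<noteq> f k"
          using inj ijk by (auto dest: inj_onD)
        ultimately show ?thesis using faceD_perm[OF xyz(1)] by simp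
      qed
      define p1 where "p1 = f 1"
      define p2 where "p2 = f 2"
      define p3 where "p3 = f 3"
      define p4 where "p4 = f 4"
      have f123: "faceD a b c p1 p2 p3 < \<eta>" unfolding p1_def p2_def p3_def
        by (rule face) (auto simp: K43_def)
      have f124: "faceD a b c p1 p2 p4 < \<eta>" unfolding p1_def p2_def p4_def
        by (rule face) (auto simp: K43_def)
      have f134: "faceD a b c p1 p3 p4 < \<eta>" unfolding p1_def p3_def p4_def
        by (rule face) (auto simp: K43_def)
      have f234: "faceD a b c p2 p3 p4 < \<eta>" unfolding p2_def p3_def p4_def
        by (rule face) (auto simp: K43_def)
      have FFlt: "FF p1 p2 p3 p4 < \<mu>" unfolding FF_def using f123 f124 f134 f234 \<eta> by linarith
      have tr: "faceD a b c 0 (q - p1) (r - p1) = faceD a b c p1 q r" for q r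
        using faceD_transl[of a b c p1 p1 q r] by simp
      have Geq: "G (p2-p1, p3-p1, p4-p1) = FF p1 p2 p3 p4"
        unfolding G_def FF_def using tr faceD_transl[of a b c p2 p1 p3 p4] by simp
      have bnd: "(dist p q)^2 \<le> q0 + 1"
        if "faceD a b c x y z < \<eta>" "(p = x \<and> q = y) \<or> (p = y \<and> q = z) \<or> (p = z \<and> q = x)"
        for p q x y z
      proof -
        have "\<bar>Qf ((dist y z)^2) ((dist z x)^2) ((dist x y)^2) - q0\<bar> < \<eta>"
          using that(1) unfolding faceD_def q0_def by (smt (verit) abs_ge_zero)
        moreover have "(dist p q)^2 \<le> Qf ((dist y z)^2) ((dist z x)^2) ((dist x y)^2)"
          using that(2) unfolding Qf_def by (auto simp: dist_commute)
        ultimately show ?thesis using \<eta> by linarith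
      qed
      have "norm (p2 - p1) \<le> M" "norm (p3 - p1) \<le> M" "norm (p4 - p1) \<le> M"
        using bnd[OF f123, of p1 p2] bnd[OF f123, of p3 p1] bnd[OF f124, of p4 p1]
        unfolding M_def by (auto simp: dist_norm norm_minus_commute intro!: real_le_rsqrt)
      then have "(p2-p1, p3-p1, p4-p1) \<in> K" by (simp add: K_def)
      then have "\<mu> \<le> G (p2-p1, p3-p1, p4-p1)" using x0 \<mu>_def by blast
      with Geq FFlt show False by simp
    qed
  qed
qed

end
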